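(* Let $(\lambda,f)$ be a flagged strict partition of length $r$, and assume that if $r\ge2$ then $\lambda_{r-1}>f_{r-1}$ or $\lambda_r>f_r$. Write $\bar\lambda_i=\lambda_i+i-1$ and, for a strict partition $\mu\subset\lambda$ (padded by zeros to length $r$), $\bar\mu_i=\mu_i+i-1$ ($1\le i\le r$). Then \[ Q_{\lambda,f}(x;z|b)=\sum_{\substack{\mu\text{ strict},\ \mu\subset\lambda\\ \bar\mu\text{ a partition}}}Q_\mu(x|b)\cdot\widetilde s_{\bar\lambda/\bar\mu,f}(z|\mathbf b)^{\star}, \] where $\star$ denotes the substitution $b_{-i}\mapsto -b_{i+1}$ for all $i\ge0$.
   Context: Shifted diagram of a strict partition $\lambda$ of length $r$: boxes $(i,j)$, $1\le i\le r$, $i\le j\le i+\lambda_i-1$. Alphabet $\mathbf P$: $1'<1<2'<2<\cdots<1^\circ<2^\circ<\cdots$. A marked shifted tableau of $(\lambda,f)$, $f\in\mathbb{Z}_{\ge0}^r$, is a filling of the shifted diagram by $\mathbf P$ with: (1) weak increase along rows and columns; (2) unmarked numbers strictly increasing down columns; (3) primed numbers strictly increasing along rows; (4) circled numbers strictly increasing along rows; (5) entries of row $i$ at most $f_i^\circ$. With $b_{-m}:=-b_{m+1}$ ($m\ge0$), the weight is $(xz|b)^T=\prod_{\text{unmarked }k\text{ in }(i,j)}(x_k+b_{j-i})\prod_{\text{primed }k'\text{ in }(i,j)}(x_k-b_{j-i})\prod_{\text{circled }k^\circ\text{ in }(i,j)}(z_k+b_{k+i-j})$ and $Q_{\lambda,f}(x;z|b)=\sum_T(xz|b)^T$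 over all such $T$; $Q_\mu(x|b)=Q_{\mu,(0,\dots,0)}(x;z|b)$ (Ivanov's factorial $Q$-function; $Q_\varnothing=1$). Row-strict flagged skew factorial Schur polynomials: let $\mathbf b=(b_i)_{i\in\mathbb{Z}}$ be independent variables. For partitions $\mu\subset\lambda$ with at most $r$ parts (skew diagram: boxes $(i,j)$ with $\mu_i<j\le\lambda_i$) and $f\in\mathbb{Z}_{\ge0}^r$, a row-strict tableau of $(\lambda/\mu,f)$ fills each box with a positive integer so that numbers strictly increase along rows, weakly increase down columns, and entries in row $i$ are $\le f_i$. Then $\widetilde s_{\lambda/\mu,f}(z|\mathbf b)=\sum_T\prod_{\text{entry }e\text{ in box }(i,j)}(z_e+b_{e+i-j})$ (no relation imposed among the $b_i$). *)

theory Defs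
  imports Main
begin

text \<open>Letters of the alphabet P: primed k', unmarked k, circled k (k >= 1).\<close>
datatype letter = LPr nat | LUn nat | LCi nat

text \<open>Order 1' < 1 < 2' < 2 < ... < 1circ < 2circ < ... via a lexicographic key.\<close>
fun lkey :: "letter \<Rightarrow> nat \<times> nat" where
  "lkey (LPr k) = (0, 2 * k)"
| "lkey (LUn k) = (0, 2 * k + 1)"
| "lkey (LCi k) = (1, k)"

definition lle :: "letter \<Rightarrow> letter \<Rightarrow> bool" where
  "lle a c \<longleftrightarrow> fst (lkey a) < fst (lkey c) \<or>
      (fst (lkey a) = fst (lkey c) \<and> snd (lkey a) \<le> snd (lkey c))"

definition strict_partition :: "nat list \<Rightarrow> bool" where
  "strict_partition l \<longleftrightarrow> sorted_wrt (>) l \<and> (\<forall>x\<in>set l. 0 < x)"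

definition shdiag :: "nat list \<Rightarrow> (nat \<times> nat) set" where
  "shdiag lam = {(i, j). 1 \<le> i \<and> i \<le> length lam \<and> i \<le> j \<and> j < i + lam ! (i - 1)}"

text \<open>Extension of b to all integers with b_{-m} = - b_{m+1} (m >= 0); only b_1, b_2, ... are used.\<close>
definition bext :: "(int \<Rightarrow> 'a::comm_ring_1) \<Rightarrow> int \<Rightarrow> 'a" where
  "bext b t = (if 1 \<le> t then b t else - b (1 - t))"

definition marked_tableau :: "nat list \<Rightarrow> nat list \<Rightarrow> nat \<Rightarrow> (nat \<times> nat \<Rightarrow> letter) \<Rightarrow> bool" where
  "marked_tableau lam f n T \<longleftrightarrow>
     (\<forall>p. p \<notin> shdiag lam \<longrightarrow> T p = LUn 0) \<and>
     (\<forall>p\<in>shdiag lam. (\<forall>k. T p = LPr k \<longrightarrow> 1 \<le> k \<and> k \<le> n) \<and>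
                      (\<forall>k. T p = LUn k \<longrightarrow> 1 \<le> k \<and> k \<le> n) \<and>
                      (\<forall>k. T p = LCi k \<longrightarrow> 1 \<le> k)) \<and>
     (\<forall>i j j'. (i, j) \<in> shdiag lam \<and> (i, j') \<in> shdiag lam \<and> j < j' \<longrightarrow>
        lle (T (i, j)) (T (i, j'))) \<and>
     (\<forall>i i' j. (i, j) \<in> shdiag lam \<and> (i', j) \<in> shdiag lam \<and> i < i' \<longrightarrow>
        lle (T (i, j)) (T (i', j))) \<and>
     (\<forall>i i' j. (i, j) \<in> shdiag lam \<and> (i', j) \<in> shdiag lam \<and> i < i' \<and> T (i, j) = T (i', j) \<longrightarrow>
        (\<forall>k. T (i, j) \<noteq> LUn k)) \<and>
     (\<forall>i j j'. (i, j) \<in> shdiag lam \<and> (i, j') \<in> shdiag lam \<and> j < j' \<and> T (i, j) = T (i, j') \<longrightarrow>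
        (\<forall>k. T (i, j) \<noteq> LPr k \<and> T (i, j) \<noteq> LCi k)) \<and>
     (\<forall>i j. (i, j) \<in> shdiag lam \<longrightarrow> lle (T (i, j)) (LCi (f ! (i - 1))))"

fun lweight :: "(nat \<Rightarrow> 'a::comm_ring_1) \<Rightarrow> (nat \<Rightarrow> 'a) \<Rightarrow> (int \<Rightarrow> 'a) \<Rightarrow> nat \<Rightarrow> nat \<Rightarrow> letter \<Rightarrow> 'a" where
  "lweight x z B i j (LUn k) = x k + B (int j - int i)"
| "lweight x z B i j (LPr k) = x k - B (int j - int i)"
| "lweight x z B i j (LCi k) = z k + B (int k + int i - int j)"

definition Qlf :: "nat list \<Rightarrow> nat list \<Rightarrow> nat \<Rightarrow> (nat \<Rightarrow> 'a::comm_ring_1) \<Rightarrow> (nat \<Rightarrow> 'a)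
    \<Rightarrow> (int \<Rightarrow> 'a) \<Rightarrow> 'a" where
  "Qlf lam f n x z b =
     (\<Sum>T\<in>{T. marked_tableau lam f n T}.
        \<Prod>p\<in>shdiag lam. lweight x z (bext b) (fst p) (snd p) (T p))"

definition Qfac :: "nat list \<Rightarrow> nat \<Rightarrow> (nat \<Rightarrow> 'a::comm_ring_1) \<Rightarrow> (int \<Rightarrow> 'a) \<Rightarrow> 'a" where
  "Qfac mu n x b = Qlf mu (replicate (length mu) 0) n x (\<lambda>_. 0) b"

definition skdiag :: "nat list \<Rightarrow> nat list \<Rightarrow> (nat \<times> nat) set" where
  "skdiag la mu = {(i, j). 1 \<le> i \<and> i \<le> length la \<and> mu ! (i - 1) < j \<and> j \<le> la ! (i - 1)}"

definition rs_tableau :: "nat list \<Rightarrow> nat list \<Rightarrow> nat list \<Rightarrow> (nat \<times> nat \<Rightarrow> nat) \<Rightarrow> bool" where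
  "rs_tableau la mu f T \<longleftrightarrow>
     (\<forall>p. p \<notin> skdiag la mu \<longrightarrow> T p = 0) \<and>
     (\<forall>i j. (i, j) \<in> skdiag la mu \<longrightarrow> 1 \<le> T (i, j) \<and> T (i, j) \<le> f ! (i - 1)) \<and>
     (\<forall>i j j'. (i, j) \<in> skdiag la mu \<and> (i, j') \<in> skdiag la mu \<and> j < j' \<longrightarrow> T (i, j) < T (i, j')) \<and>
     (\<forall>i i' j. (i, j) \<in> skdiag la mu \<and> (i', j) \<in> skdiag la mu \<and> i < i' \<longrightarrow> T (i, j) \<le> T (i', j))"

text \<open>Row-strict flagged skew factorial Schur polynomial with independent variables c_i (i in Z).\<close>
definition sTilde :: "nat list \<Rightarrow> nat list \<Rightarrow> nat list \<Rightarrow> (nat \<Rightarrow> 'a::comm_ring_1) \<Rightarrow> (int \<Rightarrow> 'a) \<Rightarrow> 'a" where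
  "sTilde la mu f z c =
     (\<Sum>T\<in>{T. rs_tableau la mu f T}.
        \<Prod>p\<in>skdiag la mu. z (T p) + c (int (T p) + int (fst p) - int (snd p)))"

definition bar :: "nat list \<Rightarrow> nat list" where
  "bar l = map (\<lambda>i. l ! i + i) [0..<length l]"

end

theory Submission
  imports Defs
begin

fun iscirc :: "letter \<Rightarrow> bool" where
  "iscirc (LCi k) = True" | "iscirc (LPr k) = False" | "iscirc (LUn k) = False"

fun cval :: "letter \<Rightarrow> nat" where
  "cval (LCi k) = k" | "cval (LPr k) = 0" | "cval (LUn k) = 0"

lemma lle_circ_up: "lle a c \<Longrightarrow> iscirc a \<Longrightarrow> iscirc c"
  by (cases a; cases c) (auto simp: lle_def)

lemma lle_nc_circ: "\<not> iscirc a \<Longrightarrow> lle a (LCi k)"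
  by (cases a) (auto simp: lle_def)

lemma lle_CiCi[simp]: "lle (LCi a) (LCi b) \<longleftrightarrow> a \<le> b"
  by (auto simp: lle_def)

lemma iscirc_eq: "iscirc a \<longleftrightarrow> a = LCi (cval a)"
  by (cases a) auto

lemma shdiag_mem: "(i, j) \<in> shdiag l \<longleftrightarrow> 1 \<le> i \<and> i \<le> length l \<and> i \<le> j \<and> j < i + l ! (i - 1)"
  by (simp add: shdiag_def)

lemma length_bar[simp]: "length (bar l) = length l"
  by (simp add: bar_def)

lemma bar_nth[simp]: "i < length l \<Longrightarrow> bar l ! i = l ! i + i"
  by (simp add: bar_def)

lemma skdiag_mem: "(i, j) \<in> skdiag la mu \<longleftrightarrow> 1 \<le> i \<and> i \<le> length la \<and> mu ! (i - 1) < j \<and> j \<le> la ! (i - 1)"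
  by (simp add: skdiag_def)

lemma sk_eq:
  assumes "length mu = length lam" "\<forall>i<length lam. mu ! i \<le> lam ! i"
  shows "skdiag (bar lam) (bar mu) = shdiag lam - shdiag mu"
proof (rule set_eqI)
  fix p :: "nat \<times> nat"
  obtain i j where p: "p = (i, j)" by fastforce
  show "p \<in> skdiag (bar lam) (bar mu) \<longleftrightarrow> p \<in> shdiag lam - shdiag mu"
  proof (cases "1 \<le> i \<and> i \<le> length lam")
    case True
    then have "i - 1 < length lam" by auto
    then have "mu ! (i - 1) \<le> lam ! (i - 1)" using assms by auto
    with True assms show ?thesis by (auto simp: p skdiag_mem shdiag_mem)
  qed (auto simp: p skdiag_mem shdiag_mem assms)
qed

lemma sh_sub:
  assumes "length mu = length lam" "\<forall>i<length lam. mu ! i \<le> lam ! i"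
  shows "shdiag mu \<subseteq> shdiag lam"
proof
  fix p assume "p \<in> shdiag mu"
  then show "p \<in> shdiag lam" using assms
  proof (cases p)
    case (Pair i j)
    then have "i - 1 < length lam" "1 \<le> i" using \<open>p \<in> shdiag mu\<close> assms by (auto simp: shdiag_mem)
    then have "mu ! (i - 1) \<le> lam ! (i - 1)" using assms by auto
    then show ?thesis using Pair \<open>p \<in> shdiag mu\<close> assms by (auto simp: shdiag_mem)
  qed
qed

definition comb :: "nat list \<Rightarrow> nat list \<Rightarrow> (nat \<times> nat \<Rightarrow> letter) \<Rightarrow> (nat \<times> nat \<Rightarrow> nat) \<Rightarrow> (nat \<times> nat \<Rightarrow> letter)" where
  "comb lam mu T1 T2 = (\<lambda>p. if p \<in> shdiag mu then T1 p else if p \<in> skdiag (bar lam) (bar mu) then LCi (T2 p) else LUn 0)"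

lemma A_nocirc:
  assumes "marked_tableau mu (replicate (length mu) 0) n T1" "p \<in> shdiag mu"
  shows "\<not> iscirc (T1 p)"
proof
  assume c: "iscirc (T1 p)"
  obtain i j where p: "p = (i, j)" by fastforce
  have ij: "1 \<le> i" "i \<le> length mu" using assms(2) p by (auto simp: shdiag_mem)
  have "lle (T1 (i, j)) (LCi (replicate (length mu) 0 ! (i - 1)))"
    using assms unfolding marked_tableau_def p by blast
  moreover have "replicate (length mu) 0 ! (i - 1) = (0::nat)" using ij by simp
  moreover have "1 \<le> cval (T1 p)" using assms c unfolding marked_tableau_def
    by (metis iscirc_eq cval.simps(1))
  ultimately show False using c p by (metis iscirc_eq lle_CiCi le_zero_eq not_one_le_zero)
qed

lemma bar_sorted_le:
  assumes "sorted_wrt (\<ge>) (bar mu)" "1 \<le> i" "i < i'" "i' \<le> length mu"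
  shows "mu ! (i' - 1) + (i' - 1) \<le> mu ! (i - 1) + (i - 1)"
proof -
  have "bar mu ! (i' - 1) \<le> bar mu ! (i - 1)"
  proof -
    have "i - 1 < i' - 1" "i' - 1 < length (bar mu)" using assms by auto
    then show ?thesis using assms(1) unfolding sorted_wrt_iff_nth_less by blast
  qed
  with assms show ?thesis by simp
qed

lemma rowKS:
  assumes "length mu = length lam" "(i, j) \<in> skdiag (bar lam) (bar mu)" "(i, j') \<in> shdiag mu"
  shows "j' < j"
  using assms by (auto simp: skdiag_mem shdiag_mem)

lemma colKS:
  assumes "length mu = length lam" "sorted_wrt (\<ge>) (bar mu)"
    "(i, j) \<in> skdiag (bar lam) (bar mu)" "(i', j) \<in> shdiag mu"
  shows "\<not> i < i'"
proof
  assume ii: "i < i'"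
  have a: "1 \<le> i" "i' \<le> length mu" "j < i' + mu ! (i' - 1)" "mu ! (i - 1) + (i - 1) < j"
    using assms by (auto simp: skdiag_mem shdiag_mem)
  have "mu ! (i' - 1) + (i' - 1) \<le> mu ! (i - 1) + (i - 1)"
    using bar_sorted_le[OF assms(2) a(1) ii a(2)] .
  with a ii show False by linarith
qed

lemma comb_mt:
  assumes len: "length mu = length lam" and le: "\<forall>i<length lam. mu ! i \<le> lam ! i"
    and srt: "sorted_wrt (\<ge>) (bar mu)"
    and MT1: "marked_tableau mu (replicate (length mu) 0) n T1"
    and RS: "rs_tableau (bar lam) (bar mu) f T2"
  shows "marked_tableau lam f n (comb lam mu T1 T2)"
proof -
  let ?S = "shdiag mu" and ?K = "skdiag (bar lam) (bar mu)" and ?D = "shdiag lam"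
  let ?C = "comb lam mu T1 T2"
  have SD: "?S \<subseteq> ?D" using sh_sub[OF len le] .
  have KD: "?K = ?D - ?S" using sk_eq[OF len le] .
  have CS: "\<And>p. p \<in> ?S \<Longrightarrow> ?C p = T1 p" by (simp add: comb_def)
  have CK: "\<And>p. p \<in> ?K \<Longrightarrow> ?C p = LCi (T2 p)" using KD by (simp add: comb_def)
  have DSK: "\<And>p. p \<in> ?D \<Longrightarrow> p \<notin> ?S \<Longrightarrow> p \<in> ?K" using KD by blast
  have NC: "\<And>p. p \<in> ?S \<Longrightarrow> \<not> iscirc (T1 p)" using A_nocirc[OF MT1] .
  have m2: "\<forall>p\<in>?S. (\<forall>k. T1 p = LPr k \<longrightarrow> 1 \<le> k \<and> k \<le> n) \<and>
                      (\<forall>k. T1 p = LUn k \<longrightarrow> 1 \<le> k \<and> k \<le> n) \<and>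
                      (\<forall>k. T1 p = LCi k \<longrightarrow> 1 \<le> k)" using MT1 unfolding marked_tableau_def by (elim conjE) assumption
  have m3: "\<forall>i j j'. (i, j) \<in> ?S \<and> (i, j') \<in> ?S \<and> j < j' \<longrightarrow> lle (T1 (i, j)) (T1 (i, j'))"
    using MT1 unfolding marked_tableau_def by (elim conjE) assumption
  have m4: "\<forall>i i' j. (i, j) \<in> ?S \<and> (i', j) \<in> ?S \<and> i < i' \<longrightarrow> lle (T1 (i, j)) (T1 (i', j))"
    using MT1 unfolding marked_tableau_def by (elim conjE) assumption
  have m5: "\<forall>i i' j. (i, j) \<in> ?S \<and> (i', j) \<in> ?S \<and> i < i' \<and> T1 (i, j) = T1 (i', j) \<longrightarrow>
        (\<forall>k. T1 (i, j) \<noteq> LUn k)" using MT1 unfolding marked_tableau_def by (elim conjE) assumption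
  have m6: "\<forall>i j j'. (i, j) \<in> ?S \<and> (i, j') \<in> ?S \<and> j < j' \<and> T1 (i, j) = T1 (i, j') \<longrightarrow>
        (\<forall>k. T1 (i, j) \<noteq> LPr k \<and> T1 (i, j) \<noteq> LCi k)" using MT1 unfolding marked_tableau_def by (elim conjE) assumption
  have r2: "\<forall>i j. (i, j) \<in> ?K \<longrightarrow> 1 \<le> T2 (i, j) \<and> T2 (i, j) \<le> f ! (i - 1)"
    using RS unfolding rs_tableau_def by (elim conjE) assumption
  have r3: "\<forall>i j j'. (i, j) \<in> ?K \<and> (i, j') \<in> ?K \<and> j < j' \<longrightarrow> T2 (i, j) < T2 (i, j')"
    using RS unfolding rs_tableau_def by (elim conjE) assumption
  have r4: "\<forall>i i' j. (i, j) \<in> ?K \<and> (i', j) \<in> ?K \<and> i < i' \<longrightarrow> T2 (i, j) \<le> T2 (i', j)"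
    using RS unfolding rs_tableau_def by (elim conjE) assumption
  have vP: "1 \<le> k \<and> k \<le> n" if p: "p \<in> ?D" and e: "?C p = LPr k" for p k
  proof (cases "p \<in> ?S")
    case True then show ?thesis using m2 e CS by auto
  next
    case False then show ?thesis using e CK DSK p by auto
  qed
  have vU: "1 \<le> k \<and> k \<le> n" if p: "p \<in> ?D" and e: "?C p = LUn k" for p k
  proof (cases "p \<in> ?S")
    case True then show ?thesis using m2 e CS by auto
  next
    case False then show ?thesis using e CK DSK p by auto
  qed
  have vC: "1 \<le> k" if p: "p \<in> ?D" and e: "?C p = LCi k" for p k
  proof (cases "p \<in> ?S")
    case True then show ?thesis using m2 e CS by auto
  next
    case False
    then have K: "p \<in> ?K" using DSK p by blast
    obtain a c where pp: "p = (a, c)" by fastforce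
    have "k = T2 p" using e CK[OF K] by simp
    then show ?thesis using r2 K pp by auto
  qed
  have vrow: "?C (i, j) \<noteq> LPr k \<and> ?C (i, j) \<noteq> LCi k"
    if a: "(i, j) \<in> ?D \<and> (i, j') \<in> ?D \<and> j < j' \<and> ?C (i, j) = ?C (i, j')" for i j j' k
  proof (cases "(i, j) \<in> ?S")
    case True
    show ?thesis
    proof (cases "(i, j') \<in> ?S")
      case True2: True
      then show ?thesis using True a m6 CS by auto
    next
      case False
      then have "(i, j') \<in> ?K" using a DSK by blast
      then show ?thesis using True a CS CK NC by (metis iscirc.simps(1))
    qed
  next
    case False
    then have K: "(i, j) \<in> ?K" using a DSK by blast
    have "(i, j') \<notin> ?S"
    proof
      assume "(i, j') \<in> ?S"
      then have "j' < j" using rowKS[OF len K] by blast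
      then show False using a by simp
    qed
    then have K2: "(i, j') \<in> ?K" using a DSK by blast
    then have "T2 (i, j) < T2 (i, j')" using K r3 a by blast
    then show ?thesis using a K K2 CK by auto
  qed
  have h1: "(\<forall>p. p \<notin> ?D \<longrightarrow> ?C p = LUn 0)"
    using SD KD by (auto simp: comb_def)
  have h2: "(\<forall>p\<in>?D. (\<forall>k. ?C p = LPr k \<longrightarrow> 1 \<le> k \<and> k \<le> n) \<and>
                      (\<forall>k. ?C p = LUn k \<longrightarrow> 1 \<le> k \<and> k \<le> n) \<and>
                      (\<forall>k. ?C p = LCi k \<longrightarrow> 1 \<le> k))"
  proof (intro ballI conjI allI impI)
    fix p k assume "p \<in> ?D" "?C p = LPr k" then show "1 \<le> k" using vP by blast
  next
    fix p k assume "p \<in> ?D" "?C p = LPr k" then show "k \<le> n" using vP by blast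
  next
    fix p k assume "p \<in> ?D" "?C p = LUn k" then show "1 \<le> k" using vU by blast
  next
    fix p k assume "p \<in> ?D" "?C p = LUn k" then show "k \<le> n" using vU by blast
  next
    fix p k assume "p \<in> ?D" "?C p = LCi k" then show "1 \<le> k" using vC by blast
  qed
  have h3: "(\<forall>i j j'. (i, j) \<in> ?D \<and> (i, j') \<in> ?D \<and> j < j' \<longrightarrow>
        lle (?C (i, j)) (?C (i, j')))"
  proof (intro allI impI)
    fix i j j' assume a: "(i, j) \<in> ?D \<and> (i, j') \<in> ?D \<and> j < j'"
    show "lle (?C (i, j)) (?C (i, j'))"
    proof (cases "(i, j') \<in> ?S")
      case True
      have "(i, j) \<in> ?S"
      proof (rule ccontr)
        assume "(i, j) \<notin> ?S"
        then have K: "(i, j) \<in> ?K" using a DSK by blast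
        then have "j' < j" using rowKS[OF len K True] by blast
        then show False using a by simp
      qed
      then show ?thesis using True a m3 CS by auto
    next
      case False
      then have K': "(i, j') \<in> ?K" using a DSK by blast
      show ?thesis
      proof (cases "(i, j) \<in> ?S")
        case True then show ?thesis using K' CS CK NC lle_nc_circ by auto
      next
        case False
        then have "(i, j) \<in> ?K" using a DSK by blast
        then have "T2 (i, j) < T2 (i, j')" using K' r3 a by blast
        then show ?thesis using K' CK \<open>(i, j) \<in> ?K\<close> by auto
      qed
    qed
  qed
  have h4: "(\<forall>i i' j. (i, j) \<in> ?D \<and> (i', j) \<in> ?D \<and> i < i' \<longrightarrow>
        lle (?C (i, j)) (?C (i', j)))"
  proof (intro allI impI)
    fix i i' j assume a: "(i, j) \<in> ?D \<and> (i', j) \<in> ?D \<and> i < i'"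
    show "lle (?C (i, j)) (?C (i', j))"
    proof (cases "(i', j) \<in> ?S")
      case True
      have "(i, j) \<in> ?S"
      proof (rule ccontr)
        assume "(i, j) \<notin> ?S"
        then have K: "(i, j) \<in> ?K" using a DSK by blast
        then have "\<not> i < i'" using colKS[OF len srt K True] by blast
        then show False using a by simp
      qed
      then show ?thesis using True a m4 CS by auto
    next
      case False
      then have K': "(i', j) \<in> ?K" using a DSK by blast
      show ?thesis
      proof (cases "(i, j) \<in> ?S")
        case True then show ?thesis using K' CS CK NC lle_nc_circ by auto
      next
        case False
        then have "(i, j) \<in> ?K" using a DSK by blast
        then have "T2 (i, j) \<le> T2 (i', j)" using K' r4 a by blast
        then show ?thesis using K' CK \<open>(i, j) \<in> ?K\<close> by auto
      qed
    qed
  qed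
  have h5: "(\<forall>i i' j. (i, j) \<in> ?D \<and> (i', j) \<in> ?D \<and> i < i' \<and> ?C (i, j) = ?C (i', j) \<longrightarrow>
        (\<forall>k. ?C (i, j) \<noteq> LUn k))"
  proof (intro allI impI)
    fix i i' j k assume a: "(i, j) \<in> ?D \<and> (i', j) \<in> ?D \<and> i < i' \<and> ?C (i, j) = ?C (i', j)"
    show "?C (i, j) \<noteq> LUn k"
    proof (cases "(i, j) \<in> ?S")
      case True
      show ?thesis
      proof (cases "(i', j) \<in> ?S")
        case True2: True
        then show ?thesis using True a m5 CS by auto
      next
        case False
        then have "(i', j) \<in> ?K" using a DSK by blast
        then show ?thesis using True a CS CK NC by (metis iscirc.simps(1))
      qed
    next
      case False
      then have "(i, j) \<in> ?K" using a DSK by blast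
      then show ?thesis using CK by auto
    qed
  qed
  have h6: "(\<forall>i j j'. (i, j) \<in> ?D \<and> (i, j') \<in> ?D \<and> j < j' \<and> ?C (i, j) = ?C (i, j') \<longrightarrow>
        (\<forall>k. ?C (i, j) \<noteq> LPr k \<and> ?C (i, j) \<noteq> LCi k))"
    by (intro allI impI, rule vrow, assumption)
  have h7: "(\<forall>i j. (i, j) \<in> ?D \<longrightarrow> lle (?C (i, j)) (LCi (f ! (i - 1))))"
  proof (intro allI impI)
    fix i j assume a: "(i, j) \<in> ?D"
    show "lle (?C (i, j)) (LCi (f ! (i - 1)))"
    proof (cases "(i, j) \<in> ?S")
      case True then show ?thesis using CS NC lle_nc_circ by auto
    next
      case False
      then have "(i, j) \<in> ?K" using a DSK by blast
      then show ?thesis using CK r2 by auto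
    qed
  qed
  show ?thesis unfolding marked_tableau_def
    apply (intro conjI)
          apply (rule h1)
         apply (rule h2)
        apply (rule h3)
       apply (rule h4)
      apply (rule h5)
     apply (rule h6)
    apply (rule h7)
    done
qed

lemma mt_out: "marked_tableau lam f n T \<Longrightarrow> p \<notin> shdiag lam \<Longrightarrow> T p = LUn 0"
proof -
  assume a: "marked_tableau lam f n T" "p \<notin> shdiag lam"
  have "\<forall>p. p \<notin> shdiag lam \<longrightarrow> T p = LUn 0" using a(1) unfolding marked_tableau_def by (elim conjE) assumption
  then show ?thesis using a(2) by blast
qed

lemma mt_val: "marked_tableau lam f n T \<Longrightarrow> p \<in> shdiag lam \<Longrightarrow>
   (\<forall>k. T p = LPr k \<longrightarrow> 1 \<le> k \<and> k \<le> n) \<and> (\<forall>k. T p = LUn k \<longrightarrow> 1 \<le> k \<and> k \<le> n) \<and> (\<forall>k. T p = LCi k \<longrightarrow> 1 \<le> k)"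
proof -
  assume a: "marked_tableau lam f n T" "p \<in> shdiag lam"
  have "\<forall>p\<in>shdiag lam. (\<forall>k. T p = LPr k \<longrightarrow> 1 \<le> k \<and> k \<le> n) \<and>
                      (\<forall>k. T p = LUn k \<longrightarrow> 1 \<le> k \<and> k \<le> n) \<and>
                      (\<forall>k. T p = LCi k \<longrightarrow> 1 \<le> k)" using a(1) unfolding marked_tableau_def by (elim conjE) assumption
  then show ?thesis using a(2) by blast
qed

lemma mt_row: "marked_tableau lam f n T \<Longrightarrow> (i, j) \<in> shdiag lam \<Longrightarrow> (i, j') \<in> shdiag lam \<Longrightarrow> j < j' \<Longrightarrow>
   lle (T (i, j)) (T (i, j'))"
proof -
  assume a: "marked_tableau lam f n T" "(i, j) \<in> shdiag lam" "(i, j') \<in> shdiag lam" "j < j'"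
  have "\<forall>i j j'. (i, j) \<in> shdiag lam \<and> (i, j') \<in> shdiag lam \<and> j < j' \<longrightarrow>
        lle (T (i, j)) (T (i, j'))" using a(1) unfolding marked_tableau_def by (elim conjE) assumption
  then show ?thesis using a(2-) by blast
qed

lemma mt_col: "marked_tableau lam f n T \<Longrightarrow> (i, j) \<in> shdiag lam \<Longrightarrow> (i', j) \<in> shdiag lam \<Longrightarrow> i < i' \<Longrightarrow>
   lle (T (i, j)) (T (i', j))"
proof -
  assume a: "marked_tableau lam f n T" "(i, j) \<in> shdiag lam" "(i', j) \<in> shdiag lam" "i < i'"
  have "\<forall>i i' j. (i, j) \<in> shdiag lam \<and> (i', j) \<in> shdiag lam \<and> i < i' \<longrightarrow>
        lle (T (i, j)) (T (i', j))" using a(1) unfolding marked_tableau_def by (elim conjE) assumption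
  then show ?thesis using a(2-) by blast
qed

lemma mt_colU: "marked_tableau lam f n T \<Longrightarrow> (i, j) \<in> shdiag lam \<Longrightarrow> (i', j) \<in> shdiag lam \<Longrightarrow> i < i' \<Longrightarrow>
   T (i, j) = T (i', j) \<Longrightarrow> T (i, j) \<noteq> LUn k"
proof -
  assume a: "marked_tableau lam f n T" "(i, j) \<in> shdiag lam" "(i', j) \<in> shdiag lam" "i < i'" "T (i, j) = T (i', j)"
  have "\<forall>i i' j. (i, j) \<in> shdiag lam \<and> (i', j) \<in> shdiag lam \<and> i < i' \<and> T (i, j) = T (i', j) \<longrightarrow>
        (\<forall>k. T (i, j) \<noteq> LUn k)" using a(1) unfolding marked_tableau_def by (elim conjE) assumption
  then show ?thesis using a(2-) by blast
qed

lemma mt_rowE: "marked_tableau lam f n T \<Longrightarrow> (i, j) \<in> shdiag lam \<Longrightarrow> (i, j') \<in> shdiag lam \<Longrightarrow> j < j' \<Longrightarrow>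
   T (i, j) = T (i, j') \<Longrightarrow> T (i, j) \<noteq> LPr k \<and> T (i, j) \<noteq> LCi k"
proof -
  assume a: "marked_tableau lam f n T" "(i, j) \<in> shdiag lam" "(i, j') \<in> shdiag lam" "j < j'" "T (i, j) = T (i, j')"
  have "\<forall>i j j'. (i, j) \<in> shdiag lam \<and> (i, j') \<in> shdiag lam \<and> j < j' \<and> T (i, j) = T (i, j') \<longrightarrow>
        (\<forall>k. T (i, j) \<noteq> LPr k \<and> T (i, j) \<noteq> LCi k)" using a(1) unfolding marked_tableau_def by (elim conjE) assumption
  then show ?thesis using a(2-) by blast
qed

lemma mt_flag: "marked_tableau lam f n T \<Longrightarrow> (i, j) \<in> shdiag lam \<Longrightarrow> lle (T (i, j)) (LCi (f ! (i - 1)))"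
proof -
  assume a: "marked_tableau lam f n T" "(i, j) \<in> shdiag lam"
  have "\<forall>i j. (i, j) \<in> shdiag lam \<longrightarrow> lle (T (i, j)) (LCi (f ! (i - 1)))"
    using a(1) unfolding marked_tableau_def by (elim conjE) assumption
  then show ?thesis using a(2-) by blast
qed

lemma mt_circ_pos: "marked_tableau lam f n T \<Longrightarrow> p \<in> shdiag lam \<Longrightarrow> iscirc (T p) \<Longrightarrow> 1 \<le> cval (T p)"
  using mt_val by (metis iscirc_eq)

lemma mt_circ_le: "marked_tableau lam f n T \<Longrightarrow> (i, j) \<in> shdiag lam \<Longrightarrow> iscirc (T (i, j)) \<Longrightarrow> cval (T (i, j)) \<le> f ! (i - 1)"
  using mt_flag by (metis iscirc_eq lle_CiCi)

section \<open>Shape of a tableau\<close>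

definition cnt :: "(nat \<times> nat \<Rightarrow> letter) \<Rightarrow> nat \<Rightarrow> nat \<Rightarrow> nat" where
  "cnt T i L = (LEAST k. L \<le> k \<or> iscirc (T (i, i + k)))"

definition shape :: "nat list \<Rightarrow> (nat \<times> nat \<Rightarrow> letter) \<Rightarrow> nat list" where
  "shape lam T = map (\<lambda>i. cnt T (Suc i) (lam ! i)) [0..<length lam]"

lemma cnt_le: "cnt T i L \<le> L"
  unfolding cnt_def by (rule Least_le) simp

lemma length_shape[simp]: "length (shape lam T) = length lam"
  by (simp add: shape_def)

lemma shape_nth: "i < length lam \<Longrightarrow> shape lam T ! i = cnt T (Suc i) (lam ! i)"
  by (simp add: shape_def)

lemma cell_in: "(i, i + k) \<in> shdiag lam \<longleftrightarrow> 1 \<le> i \<and> i \<le> length lam \<and> k < lam ! (i - 1)"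
  by (auto simp: shdiag_mem)

lemma cnt_char:
  assumes MT: "marked_tableau lam f n T" and i: "1 \<le> i" "i \<le> length lam" and k: "k < lam ! (i - 1)"
  shows "iscirc (T (i, i + k)) \<longleftrightarrow> cnt T i (lam ! (i - 1)) \<le> k"
proof
  assume "iscirc (T (i, i + k))"
  then show "cnt T i (lam ! (i - 1)) \<le> k" unfolding cnt_def by (intro Least_le) simp
next
  let ?c = "cnt T i (lam ! (i - 1))"
  assume c: "?c \<le> k"
  have "lam ! (i - 1) \<le> ?c \<or> iscirc (T (i, i + ?c))"
    unfolding cnt_def by (rule LeastI_ex) blast
  then have ic: "iscirc (T (i, i + ?c))" using c k by linarith
  show "iscirc (T (i, i + k))"
  proof (cases "?c = k")
    case True then show ?thesis using ic by simp
  next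
    case False
    then have "?c < k" using c by simp
    moreover have "(i, i + ?c) \<in> shdiag lam" "(i, i + k) \<in> shdiag lam" using i k c by (auto simp: cell_in)
    ultimately have "lle (T (i, i + ?c)) (T (i, i + k))" using mt_row[OF MT] by simp
    then show ?thesis using ic lle_circ_up by blast
  qed
qed

lemma shape_mem:
  assumes MT: "marked_tableau lam f n T" and p: "(i, j) \<in> shdiag lam"
  shows "(i, j) \<in> shdiag (shape lam T) \<longleftrightarrow> \<not> iscirc (T (i, j))"
proof -
  have i: "1 \<le> i" "i \<le> length lam" "i \<le> j" "j < i + lam ! (i - 1)" using p by (auto simp: shdiag_mem)
  define k where "k = j - i"
  have j: "j = i + k" using i k_def by simp
  have k: "k < lam ! (i - 1)" using i j by simp
  have sn: "shape lam T ! (i - 1) = cnt T i (lam ! (i - 1))" using i shape_nth[of "i - 1" lam T] by simp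
  have "(i, j) \<in> shdiag (shape lam T) \<longleftrightarrow> k < cnt T i (lam ! (i - 1))"
    using i j sn by (auto simp: shdiag_mem)
  also have "\<dots> \<longleftrightarrow> \<not> iscirc (T (i, j))" using cnt_char[OF MT i(1,2) k] j by auto
  finally show ?thesis .
qed

lemma sp_lt: "strict_partition lam \<Longrightarrow> Suc a < length lam \<Longrightarrow> lam ! (Suc a) < lam ! a"
  unfolding strict_partition_def sorted_wrt_iff_nth_less by auto

lemma sp_pos: "strict_partition lam \<Longrightarrow> a < length lam \<Longrightarrow> 0 < lam ! a"
  unfolding strict_partition_def by auto

lemma shape_step1:
  assumes MT: "marked_tableau lam f n T" and sp: "strict_partition lam" and a: "Suc a < length lam"
    and pos: "0 < shape lam T ! Suc a"
  shows "shape lam T ! Suc a < shape lam T ! a"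
proof -
  let ?mu = "shape lam T"
  define m where "m = ?mu ! Suc a"
  have mle: "m \<le> lam ! Suc a" using a cnt_le unfolding m_def by (simp add: shape_nth)
  have lt: "lam ! Suc a < lam ! a" using sp_lt[OF sp a] .
  define j where "j = Suc a + m"
  have c2: "(Suc (Suc a), j) \<in> shdiag lam" using a mle pos unfolding j_def m_def by (auto simp: shdiag_mem)
  have c2m: "(Suc (Suc a), j) \<in> shdiag ?mu" using a pos unfolding j_def m_def by (auto simp: shdiag_mem)
  have nc2: "\<not> iscirc (T (Suc (Suc a), j))" using shape_mem[OF MT c2] c2m by simp
  have c1: "(Suc a, j) \<in> shdiag lam" using a mle lt unfolding j_def by (auto simp: shdiag_mem)
  have "lle (T (Suc a, j)) (T (Suc (Suc a), j))" using mt_col[OF MT c1 c2] by simp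
  then have "\<not> iscirc (T (Suc a, j))" using nc2 lle_circ_up by blast
  then have "(Suc a, j) \<in> shdiag ?mu" using shape_mem[OF MT c1] by simp
  then show ?thesis unfolding j_def m_def by (auto simp: shdiag_mem)
qed

lemma shape_step0:
  assumes MT: "marked_tableau lam f n T" and sp: "strict_partition lam" and a: "Suc a < length lam"
    and z: "shape lam T ! a = 0"
  shows "shape lam T ! Suc a = 0"
proof -
  let ?mu = "shape lam T"
  have lt: "lam ! Suc a < lam ! a" using sp_lt[OF sp a] .
  have p2: "0 < lam ! Suc a" using sp_pos[OF sp a] .
  have c1: "(Suc a, Suc (Suc a)) \<in> shdiag lam" using a lt p2 by (auto simp: shdiag_mem)
  have "(Suc a, Suc (Suc a)) \<notin> shdiag ?mu" using z by (auto simp: shdiag_mem)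
  then have ic1: "iscirc (T (Suc a, Suc (Suc a)))" using shape_mem[OF MT c1] by simp
  have c2: "(Suc (Suc a), Suc (Suc a)) \<in> shdiag lam" using a p2 by (auto simp: shdiag_mem)
  have "lle (T (Suc a, Suc (Suc a))) (T (Suc (Suc a), Suc (Suc a)))" using mt_col[OF MT c1 c2] by simp
  then have "iscirc (T (Suc (Suc a), Suc (Suc a)))" using ic1 lle_circ_up by blast
  then have "(Suc (Suc a), Suc (Suc a)) \<notin> shdiag ?mu" using shape_mem[OF MT c2] by simp
  then show ?thesis using a by (auto simp: shdiag_mem)
qed

lemma shape_zero_row:
  assumes MT: "marked_tableau lam f n T" and sp: "strict_partition lam" and b: "b < length lam"
    and z: "shape lam T ! b = 0"
  shows "lam ! b \<le> f ! b"
proof -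
  let ?mu = "shape lam T" and ?i = "Suc b"
  have inD: "(?i, ?i + k) \<in> shdiag lam" if "k < lam ! b" for k using b that by (auto simp: shdiag_mem)
  have circ: "iscirc (T (?i, ?i + k))" if "k < lam ! b" for k
  proof -
    have "(?i, ?i + k) \<notin> shdiag ?mu" using z by (auto simp: shdiag_mem)
    then show ?thesis using shape_mem[OF MT inD[OF that]] by simp
  qed
  have grow: "k < lam ! b \<longrightarrow> k + 1 \<le> cval (T (?i, ?i + k))" for k
  proof (induction k)
    case 0
    show ?case
    proof
      assume k0: "0 < lam ! b"
      show "0 + 1 \<le> cval (T (?i, ?i + 0))" using mt_circ_pos[OF MT inD[OF k0] circ[OF k0]] by simp
    qed
  next
    case (Suc k)
    show ?case
    proof
      assume sk: "Suc k < lam ! b"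
      then have k: "k < lam ! b" by simp
      have l: "lle (T (?i, ?i + k)) (T (?i, ?i + Suc k))" using mt_row[OF MT inD[OF k] inD[OF sk]] by simp
      have e1: "T (?i, ?i + k) = LCi (cval (T (?i, ?i + k)))" using circ[OF k] iscirc_eq by blast
      have e2: "T (?i, ?i + Suc k) = LCi (cval (T (?i, ?i + Suc k)))" using circ[OF sk] iscirc_eq by blast
      have le: "cval (T (?i, ?i + k)) \<le> cval (T (?i, ?i + Suc k))" using l e1 e2 by (metis lle_CiCi)
      have "T (?i, ?i + k) \<noteq> T (?i, ?i + Suc k)"
        using mt_rowE[OF MT inD[OF k] inD[OF sk], of "cval (T (?i, ?i + k))"] e1 by auto
      then have "cval (T (?i, ?i + k)) \<noteq> cval (T (?i, ?i + Suc k))" using e1 e2 by metis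
      then show "Suc k + 1 \<le> cval (T (?i, ?i + Suc k))" using le Suc.IH k by simp
    qed
  qed
  have L: "0 < lam ! b" using sp_pos[OF sp b] .
  then have "lam ! b - 1 < lam ! b" by simp
  from grow[of "lam ! b - 1"] this have "lam ! b \<le> cval (T (?i, ?i + (lam ! b - 1)))" using L by simp
  also have "\<dots> \<le> f ! (?i - 1)" using mt_circ_le[OF MT inD circ] \<open>lam ! b - 1 < lam ! b\<close> by blast
  finally show ?thesis by simp
qed

lemma shape_pos:
  assumes MT: "marked_tableau lam f n T" and sp: "strict_partition lam"
    and hyp: "2 \<le> length lam \<longrightarrow>
           f ! (length lam - 2) < lam ! (length lam - 2) \<or> f ! (length lam - 1) < lam ! (length lam - 1)"
    and a: "Suc a < length lam"
  shows "0 < shape lam T ! a"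
proof (rule ccontr)
  assume "\<not> 0 < shape lam T ! a"
  then have z: "shape lam T ! a = 0" by simp
  have all: "a + d < length lam \<longrightarrow> shape lam T ! (a + d) = 0" for d
  proof (induction d)
    case 0 then show ?case using z by simp
  next
    case (Suc d)
    show ?case using shape_step0[OF MT sp, of "a + d"] Suc by simp
  qed
  define r where "r = length lam"
  have r2: "2 \<le> r" using a r_def by simp
  have "shape lam T ! (r - 2) = 0" using all[of "r - 2 - a"] a r_def by simp
  then have l1: "lam ! (r - 2) \<le> f ! (r - 2)" using shape_zero_row[OF MT sp] r2 r_def by simp
  have "shape lam T ! (r - 1) = 0" using all[of "r - 1 - a"] a r_def by simp
  then have l2: "lam ! (r - 1) \<le> f ! (r - 1)" using shape_zero_row[OF MT sp] r2 r_def by simp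
  show False using hyp r2 l1 l2 r_def by auto
qed

lemma shape_cons:
  assumes MT: "marked_tableau lam f n T" and sp: "strict_partition lam"
    and hyp: "2 \<le> length lam \<longrightarrow>
           f ! (length lam - 2) < lam ! (length lam - 2) \<or> f ! (length lam - 1) < lam ! (length lam - 1)"
    and a: "Suc a < length lam"
  shows "shape lam T ! Suc a + 1 \<le> shape lam T ! a"
proof (cases "shape lam T ! Suc a = 0")
  case True then show ?thesis using shape_pos[OF MT sp hyp a] by simp
next
  case False then show ?thesis using shape_step1[OF MT sp a] by simp
qed

lemma chain:
  assumes c: "\<forall>a. Suc a < length l \<longrightarrow> l ! Suc a + 1 \<le> (l ! a :: nat)"
  shows "i < j \<Longrightarrow> j < length l \<Longrightarrow> l ! j + (j - i) \<le> l ! i"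
proof (induction j)
  case 0 then show ?case by simp
next
  case (Suc j)
  have s: "l ! Suc j + 1 \<le> l ! j" using c Suc.prems by blast
  show ?case
  proof (cases "i = j")
    case True then show ?thesis using s by simp
  next
    case False
    then have "l ! j + (j - i) \<le> l ! i" using Suc by simp
    then show ?thesis using s False Suc.prems by simp
  qed
qed

lemma chain_sorted:
  assumes c: "\<forall>a. Suc a < length l \<longrightarrow> l ! Suc a + 1 \<le> (l ! a :: nat)"
  shows "sorted_wrt (>) l" "sorted_wrt (\<ge>) (bar l)"
proof -
  show "sorted_wrt (>) l" unfolding sorted_wrt_iff_nth_less
    using chain[OF c] by (metis add_le_cancel_left diff_is_0_eq' le_add1 less_le_trans not_less zero_less_diff nat_less_le le_antisym less_imp_le_nat not_add_less1 add_diff_inverse_nat)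
  show "sorted_wrt (\<ge>) (bar l)" unfolding sorted_wrt_iff_nth_less
  proof (intro allI impI)
    fix i j assume ij: "i < j" "j < length (bar l)"
    then have "l ! j + (j - i) \<le> l ! i" using chain[OF c] by simp
    then show "bar l ! j \<le> bar l ! i" using ij by simp
  qed
qed

lemma decomp: "sorted_wrt (>) (mu :: nat list) \<Longrightarrow> \<exists>nu k. mu = nu @ replicate k 0 \<and> strict_partition nu"
proof (induction mu)
  case Nil
  then show ?case by (rule_tac x="[]" in exI, rule_tac x=0 in exI) (simp add: strict_partition_def)
next
  case (Cons x xs)
  then have all: "\<forall>y\<in>set xs. y < x" and sx: "sorted_wrt (>) xs" by auto
  show ?case
  proof (cases "x = 0")
    case True
    then have "xs = []" using all by (cases xs) auto
    then show ?thesis using True by (rule_tac x="[]" in exI, rule_tac x=1 in exI) (simp add: strict_partition_def)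
  next
    case False
    obtain nu k where nk: "xs = nu @ replicate k 0" "strict_partition nu" using Cons.IH[OF sx] by blast
    have "strict_partition (x # nu)" using nk all False unfolding strict_partition_def by auto
    then show ?thesis using nk by (rule_tac x="x # nu" in exI, rule_tac x=k in exI) simp
  qed
qed

section \<open>Decomposition\<close>

definition part1 :: "nat list \<Rightarrow> (nat \<times> nat \<Rightarrow> letter) \<Rightarrow> (nat \<times> nat \<Rightarrow> letter)" where
  "part1 mu T = (\<lambda>p. if p \<in> shdiag mu then T p else LUn 0)"

definition part2 :: "nat list \<Rightarrow> nat list \<Rightarrow> (nat \<times> nat \<Rightarrow> letter) \<Rightarrow> (nat \<times> nat \<Rightarrow> nat)" where
  "part2 lam mu T = (\<lambda>p. if p \<in> skdiag (bar lam) (bar mu) then cval (T p) else 0)"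

lemma shape_le: "\<forall>i<length lam. shape lam T ! i \<le> lam ! i"
  by (simp add: shape_nth cnt_le)

lemma shape_props:
  assumes MT: "marked_tableau lam f n T" and sp: "strict_partition lam"
    and hyp: "2 \<le> length lam \<longrightarrow>
           f ! (length lam - 2) < lam ! (length lam - 2) \<or> f ! (length lam - 1) < lam ! (length lam - 1)"
  shows "(\<exists>nu k. shape lam T = nu @ replicate k 0 \<and> strict_partition nu)"
    "sorted_wrt (\<ge>) (bar (shape lam T))"
proof -
  have c: "\<forall>a. Suc a < length (shape lam T) \<longrightarrow> shape lam T ! Suc a + 1 \<le> shape lam T ! a"
    using shape_cons[OF MT sp hyp] by simp
  show "\<exists>nu k. shape lam T = nu @ replicate k 0 \<and> strict_partition nu"
    using decomp chain_sorted(1)[OF c] by blast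
  show "sorted_wrt (\<ge>) (bar (shape lam T))" using chain_sorted(2)[OF c] .
qed

lemma part1_A:
  assumes MT: "marked_tableau lam f n T"
  shows "marked_tableau (shape lam T) (replicate (length (shape lam T)) 0) n (part1 (shape lam T) T)"
proof -
  let ?mu = "shape lam T"
  let ?S = "shdiag ?mu" and ?P = "part1 (shape lam T) T"
  have SD: "?S \<subseteq> shdiag lam" using sh_sub[OF length_shape shape_le] .
  have PS: "\<And>p. p \<in> ?S \<Longrightarrow> ?P p = T p" by (simp add: part1_def)
  have h1: "\<forall>p. p \<notin> ?S \<longrightarrow> ?P p = LUn 0" by (simp add: part1_def)
  have h2: "\<forall>p\<in>?S. (\<forall>k. ?P p = LPr k \<longrightarrow> 1 \<le> k \<and> k \<le> n) \<and>
                      (\<forall>k. ?P p = LUn k \<longrightarrow> 1 \<le> k \<and> k \<le> n) \<and>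
                      (\<forall>k. ?P p = LCi k \<longrightarrow> 1 \<le> k)"
  proof
    fix p assume p: "p \<in> ?S"
    show "(\<forall>k. ?P p = LPr k \<longrightarrow> 1 \<le> k \<and> k \<le> n) \<and>
                      (\<forall>k. ?P p = LUn k \<longrightarrow> 1 \<le> k \<and> k \<le> n) \<and>
                      (\<forall>k. ?P p = LCi k \<longrightarrow> 1 \<le> k)"
      using mt_val[OF MT, of p] p SD PS[OF p] by auto
  qed
  have h3: "\<forall>i j j'. (i, j) \<in> ?S \<and> (i, j') \<in> ?S \<and> j < j' \<longrightarrow> lle (?P (i, j)) (?P (i, j'))"
    using mt_row[OF MT] SD PS by (metis subsetD)
  have h4: "\<forall>i i' j. (i, j) \<in> ?S \<and> (i', j) \<in> ?S \<and> i < i' \<longrightarrow> lle (?P (i, j)) (?P (i', j))"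
    using mt_col[OF MT] SD PS by (metis subsetD)
  have h5: "\<forall>i i' j. (i, j) \<in> ?S \<and> (i', j) \<in> ?S \<and> i < i' \<and> ?P (i, j) = ?P (i', j) \<longrightarrow>
        (\<forall>k. ?P (i, j) \<noteq> LUn k)"
    using mt_colU[OF MT] SD PS by (metis subsetD)
  have h6: "\<forall>i j j'. (i, j) \<in> ?S \<and> (i, j') \<in> ?S \<and> j < j' \<and> ?P (i, j) = ?P (i, j') \<longrightarrow>
        (\<forall>k. ?P (i, j) \<noteq> LPr k \<and> ?P (i, j) \<noteq> LCi k)"
    using mt_rowE[OF MT] SD PS by (metis subsetD)
  have h7: "\<forall>i j. (i, j) \<in> ?S \<longrightarrow> lle (?P (i, j)) (LCi (replicate (length ?mu) 0 ! (i - 1)))"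
  proof (intro allI impI)
    fix i j assume p: "(i, j) \<in> ?S"
    then have "\<not> iscirc (T (i, j))" using shape_mem[OF MT] SD by blast
    then show "lle (?P (i, j)) (LCi (replicate (length ?mu) 0 ! (i - 1)))" using PS[OF p] lle_nc_circ by simp
  qed
  show ?thesis unfolding marked_tableau_def
    apply (intro conjI)
          apply (rule h1)
         apply (rule h2)
        apply (rule h3)
       apply (rule h4)
      apply (rule h5)
     apply (rule h6)
    apply (rule h7)
    done
qed

lemma part2_B:
  assumes MT: "marked_tableau lam f n T"
  shows "rs_tableau (bar lam) (bar (shape lam T)) f (part2 lam (shape lam T) T)"
proof -
  let ?mu = "shape lam T"
  let ?S = "shdiag ?mu" and ?K = "skdiag (bar lam) (bar ?mu)" and ?P = "part2 lam (shape lam T) T"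
  have KD: "?K = shdiag lam - ?S" using sk_eq[OF length_shape shape_le] .
  have PK: "\<And>p. p \<in> ?K \<Longrightarrow> ?P p = cval (T p)" by (simp add: part2_def)
  have KC: "\<And>p. p \<in> ?K \<Longrightarrow> iscirc (T p)" using KD shape_mem[OF MT] by (metis DiffE surj_pair)
  have KDD: "\<And>p. p \<in> ?K \<Longrightarrow> p \<in> shdiag lam" using KD by blast
  have h1: "\<forall>p. p \<notin> ?K \<longrightarrow> ?P p = 0" by (simp add: part2_def)
  have h2: "\<forall>i j. (i, j) \<in> ?K \<longrightarrow> 1 \<le> ?P (i, j) \<and> ?P (i, j) \<le> f ! (i - 1)"
    using PK KC KDD mt_circ_pos[OF MT] mt_circ_le[OF MT] by simp
  have h3: "\<forall>i j j'. (i, j) \<in> ?K \<and> (i, j') \<in> ?K \<and> j < j' \<longrightarrow> ?P (i, j) < ?P (i, j')"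
  proof (intro allI impI)
    fix i j j' assume a: "(i, j) \<in> ?K \<and> (i, j') \<in> ?K \<and> j < j'"
    have e1: "T (i, j) = LCi (cval (T (i, j)))" using KC a iscirc_eq by blast
    have e2: "T (i, j') = LCi (cval (T (i, j')))" using KC a iscirc_eq by blast
    have "lle (T (i, j)) (T (i, j'))" using mt_row[OF MT] KDD a by blast
    then have le: "cval (T (i, j)) \<le> cval (T (i, j'))" using e1 e2 by (metis lle_CiCi)
    have "T (i, j) \<noteq> T (i, j')" using mt_rowE[OF MT, of i j j' "cval (T (i, j))"] KDD a e1 by auto
    then have "cval (T (i, j)) \<noteq> cval (T (i, j'))" using e1 e2 by metis
    then show "?P (i, j) < ?P (i, j')" using le PK a by simp
  qed
  have h4: "\<forall>i i' j. (i, j) \<in> ?K \<and> (i', j) \<in> ?K \<and> i < i' \<longrightarrow> ?P (i, j) \<le> ?P (i', j)"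
  proof (intro allI impI)
    fix i i' j assume a: "(i, j) \<in> ?K \<and> (i', j) \<in> ?K \<and> i < i'"
    have e1: "T (i, j) = LCi (cval (T (i, j)))" using KC a iscirc_eq by blast
    have e2: "T (i', j) = LCi (cval (T (i', j)))" using KC a iscirc_eq by blast
    have "lle (T (i, j)) (T (i', j))" using mt_col[OF MT] KDD a by blast
    then have le: "cval (T (i, j)) \<le> cval (T (i', j))" using e1 e2 by (metis lle_CiCi)
    then show "?P (i, j) \<le> ?P (i', j)" using PK a by simp
  qed
  show ?thesis unfolding rs_tableau_def
    apply (intro conjI)
       apply (rule h1)
      apply (rule h2)
     apply (rule h3)
    apply (rule h4)
    done
qed

lemma recon:
  assumes MT: "marked_tableau lam f n T"
  shows "comb lam (shape lam T) (part1 (shape lam T) T) (part2 lam (shape lam T) T) = T"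
proof
  fix p
  let ?mu = "shape lam T"
  have KD: "skdiag (bar lam) (bar ?mu) = shdiag lam - shdiag ?mu" using sk_eq[OF length_shape shape_le] .
  have SD: "shdiag ?mu \<subseteq> shdiag lam" using sh_sub[OF length_shape shape_le] .
  show "comb lam ?mu (part1 ?mu T) (part2 lam ?mu T) p = T p"
  proof (cases "p \<in> shdiag ?mu")
    case True then show ?thesis by (simp add: comb_def part1_def)
  next
    case False
    show ?thesis
    proof (cases "p \<in> shdiag lam")
      case True
      then have "iscirc (T p)" using False shape_mem[OF MT] by (metis surj_pair)
      then have e: "LCi (cval (T p)) = T p" using iscirc_eq by metis
      show ?thesis using True False KD by (simp add: comb_def part2_def) (rule e)
    next
      case F2: False
      then show ?thesis using False KD mt_out[OF MT F2] by (simp add: comb_def)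
    qed
  qed
qed

lemma shape_comb:
  assumes len: "length mu = length lam" and le: "\<forall>i<length lam. mu ! i \<le> lam ! i"
    and MT1: "marked_tableau mu (replicate (length mu) 0) n T1"
  shows "shape lam (comb lam mu T1 T2) = mu"
proof (rule nth_equalityI)
  show "length (shape lam (comb lam mu T1 T2)) = length mu" using len by simp
  fix i assume "i < length (shape lam (comb lam mu T1 T2))"
  then have i: "i < length lam" by simp
  let ?C = "comb lam mu T1 T2"
  have KD: "skdiag (bar lam) (bar mu) = shdiag lam - shdiag mu" using sk_eq[OF len le] .
  have "cnt ?C (Suc i) (lam ! i) = mu ! i"
    unfolding cnt_def
  proof (rule Least_equality)
    show "lam ! i \<le> mu ! i \<or> iscirc (?C (Suc i, Suc i + mu ! i))"
    proof (cases "mu ! i < lam ! i")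
      case True
      have "(Suc i, Suc i + mu ! i) \<in> shdiag lam" using True i by (auto simp: shdiag_mem)
      moreover have nS: "(Suc i, Suc i + mu ! i) \<notin> shdiag mu" by (auto simp: shdiag_mem)
      ultimately have "(Suc i, Suc i + mu ! i) \<in> skdiag (bar lam) (bar mu)" using KD by blast
      then have "?C (Suc i, Suc i + mu ! i) = LCi (T2 (Suc i, Suc i + mu ! i))" using nS by (simp add: comb_def)
      then show ?thesis by simp
    qed simp
  next
    fix y assume y: "lam ! i \<le> y \<or> iscirc (?C (Suc i, Suc i + y))"
    show "mu ! i \<le> y"
    proof (rule ccontr)
      assume "\<not> mu ! i \<le> y"
      then have yl: "y < mu ! i" by simp
      then have "y < lam ! i" using le i by (meson less_le_trans)
      have S: "(Suc i, Suc i + y) \<in> shdiag mu" using yl i len by (auto simp: shdiag_mem)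
      then have "\<not> iscirc (T1 (Suc i, Suc i + y))" using A_nocirc[OF MT1] by blast
      then show False using y \<open>y < lam ! i\<close> S by (simp add: comb_def)
    qed
  qed
  then show "shape lam ?C ! i = mu ! i" using i by (simp add: shape_nth)
qed

lemma fin_sh: "finite (shdiag l)"
proof (rule finite_subset)
  show "shdiag l \<subseteq> {1..length l} \<times> {..< length l + sum_list l}"
  proof
    fix p assume "p \<in> shdiag l"
    then obtain i j where p: "p = (i, j)" and a: "1 \<le> i" "i \<le> length l" "j < i + l ! (i - 1)"
      by (cases p) (auto simp: shdiag_mem)
    have "l ! (i - 1) \<in> set l" using a by simp
    then have "l ! (i - 1) \<le> sum_list l" by (rule member_le_sum_list) simp
    then show "p \<in> {1..length l} \<times> {..< length l + sum_list l}" using a p by auto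
  qed
qed simp

lemma fin_sk: "finite (skdiag la mu)"
proof (rule finite_subset)
  show "skdiag la mu \<subseteq> {1..length la} \<times> {.. sum_list la}"
  proof
    fix p assume "p \<in> skdiag la mu"
    then obtain i j where p: "p = (i, j)" and a: "1 \<le> i" "i \<le> length la" "j \<le> la ! (i - 1)"
      by (cases p) (auto simp: skdiag_mem)
    have "la ! (i - 1) \<in> set la" using a by simp
    then have "la ! (i - 1) \<le> sum_list la" by (rule member_le_sum_list) simp
    then show "p \<in> {1..length la} \<times> {.. sum_list la}" using a p by auto
  qed
qed simp

lemma fin_A: "finite {T. marked_tableau mu (replicate (length mu) 0) n T}"
proof (rule finite_subset)
  let ?V = "LPr ` {..n} \<union> LUn ` {..n}"
  show "{T. marked_tableau mu (replicate (length mu) 0) n T} \<subseteq>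
     {T. \<forall>x. (x \<in> shdiag mu \<longrightarrow> T x \<in> ?V) \<and> (x \<notin> shdiag mu \<longrightarrow> T x = LUn 0)}"
  proof (intro subsetI)
    fix T assume "T \<in> {T. marked_tableau mu (replicate (length mu) 0) n T}"
    then have MT: "marked_tableau mu (replicate (length mu) 0) n T" by simp
    have "\<forall>x. (x \<in> shdiag mu \<longrightarrow> T x \<in> ?V) \<and> (x \<notin> shdiag mu \<longrightarrow> T x = LUn 0)"
    proof (intro allI conjI impI)
      fix x assume x: "x \<in> shdiag mu"
      have nc: "\<not> iscirc (T x)" using A_nocirc[OF MT x] .
      have v: "(\<forall>k. T x = LPr k \<longrightarrow> 1 \<le> k \<and> k \<le> n) \<and> (\<forall>k. T x = LUn k \<longrightarrow> 1 \<le> k \<and> k \<le> n)"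
        using mt_val[OF MT x] by blast
      show "T x \<in> ?V" using nc v by (cases "T x") auto
    next
      fix x assume x: "x \<notin> shdiag mu"
      show "T x = LUn 0" using mt_out[OF MT x] .
    qed
    then show "T \<in> {T. \<forall>x. (x \<in> shdiag mu \<longrightarrow> T x \<in> ?V) \<and> (x \<notin> shdiag mu \<longrightarrow> T x = LUn 0)}" by simp
  qed
  show "finite {T. \<forall>x. (x \<in> shdiag mu \<longrightarrow> T x \<in> ?V) \<and> (x \<notin> shdiag mu \<longrightarrow> T x = LUn 0)}"
    by (rule finite_set_of_finite_funs) (auto simp: fin_sh)
qed

lemma fin_B:
  assumes "length f = length la"
  shows "finite {T. rs_tableau la mu f T}"
proof (rule finite_subset)
  let ?K = "skdiag la mu"
  show "{T. rs_tableau la mu f T} \<subseteq>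
     {T. \<forall>x. (x \<in> ?K \<longrightarrow> T x \<in> {..sum_list f}) \<and> (x \<notin> ?K \<longrightarrow> T x = 0)}"
  proof (safe)
    fix T x assume RS: "rs_tableau la mu f T" and x: "x \<in> ?K"
    have r2: "\<forall>i j. (i, j) \<in> ?K \<longrightarrow> 1 \<le> T (i, j) \<and> T (i, j) \<le> f ! (i - 1)"
      using RS unfolding rs_tableau_def by (elim conjE) assumption
    obtain i j where p: "x = (i, j)" by fastforce
    have a: "1 \<le> i" "i \<le> length la" using x p by (auto simp: skdiag_mem)
    have "f ! (i - 1) \<in> set f" using a assms by simp
    then have "f ! (i - 1) \<le> sum_list f" by (rule member_le_sum_list) simp
    then show "T x \<le> sum_list f" using r2 x p by fastforce
  next
    fix T x assume RS: "rs_tableau la mu f T" and x: "x \<notin> ?K"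
    have r1: "\<forall>p. p \<notin> ?K \<longrightarrow> T p = 0"
      using RS unfolding rs_tableau_def by (elim conjE) assumption
    then show "T x = 0" using x by blast
  qed
  show "finite {T. \<forall>x. (x \<in> ?K \<longrightarrow> T x \<in> {..sum_list f}) \<and> (x \<notin> ?K \<longrightarrow> T x = 0)}"
    by (rule finite_set_of_finite_funs) (auto simp: fin_sk)
qed

section \<open>Weights\<close>

lemma lweight_nc: "\<not> iscirc l \<Longrightarrow> lweight x z B i j l = lweight x z' B i j l"
  by (cases l) auto

lemma wfac:
  assumes len: "length mu = length lam" and le: "\<forall>i<length lam. mu ! i \<le> lam ! i"
    and MT1: "marked_tableau mu (replicate (length mu) 0) n T1"
  shows "(\<Prod>p\<in>shdiag lam. lweight x z B (fst p) (snd p) (comb lam mu T1 T2 p)) =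
    (\<Prod>p\<in>shdiag mu. lweight x (\<lambda>_. 0) B (fst p) (snd p) (T1 p)) *
    (\<Prod>p\<in>skdiag (bar lam) (bar mu). z (T2 p) + B (int (T2 p) + int (fst p) - int (snd p)))"
proof -
  let ?S = "shdiag mu" and ?K = "skdiag (bar lam) (bar mu)"
  have SD: "?S \<subseteq> shdiag lam" using sh_sub[OF len le] .
  have KD: "?K = shdiag lam - ?S" using sk_eq[OF len le] .
  have U: "shdiag lam = ?S \<union> ?K" using SD KD by blast
  have I: "?S \<inter> ?K = {}" using KD by blast
  have "(\<Prod>p\<in>shdiag lam. lweight x z B (fst p) (snd p) (comb lam mu T1 T2 p)) =
     (\<Prod>p\<in>?S. lweight x z B (fst p) (snd p) (comb lam mu T1 T2 p)) *
     (\<Prod>p\<in>?K. lweight x z B (fst p) (snd p) (comb lam mu T1 T2 p))"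
    unfolding U by (rule prod.union_disjoint) (auto simp: fin_sh fin_sk I)
  also have "(\<Prod>p\<in>?S. lweight x z B (fst p) (snd p) (comb lam mu T1 T2 p)) =
      (\<Prod>p\<in>?S. lweight x (\<lambda>_. 0) B (fst p) (snd p) (T1 p))"
  proof (rule prod.cong)
    fix p assume p: "p \<in> ?S"
    show "lweight x z B (fst p) (snd p) (comb lam mu T1 T2 p) = lweight x (\<lambda>_. 0) B (fst p) (snd p) (T1 p)"
      using p lweight_nc[OF A_nocirc[OF MT1 p]] by (simp add: comb_def)
  qed simp
  also have "(\<Prod>p\<in>?K. lweight x z B (fst p) (snd p) (comb lam mu T1 T2 p)) =
      (\<Prod>p\<in>?K. z (T2 p) + B (int (T2 p) + int (fst p) - int (snd p)))"
  proof (rule prod.cong)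
    fix p assume p: "p \<in> ?K"
    then have "p \<notin> ?S" using I by blast
    then show "lweight x z B (fst p) (snd p) (comb lam mu T1 T2 p) = z (T2 p) + B (int (T2 p) + int (fst p) - int (snd p))"
      using p by (simp add: comb_def)
  qed simp
  finally show ?thesis .
qed

lemma rs_out: "rs_tableau la mu f T \<Longrightarrow> p \<notin> skdiag la mu \<Longrightarrow> T p = 0"
proof -
  assume a: "rs_tableau la mu f T" "p \<notin> skdiag la mu"
  have "\<forall>p. p \<notin> skdiag la mu \<longrightarrow> T p = 0" using a(1) unfolding rs_tableau_def by (elim conjE) assumption
  then show ?thesis using a(2) by blast
qed

theorem mainTheorem3:
  fixes lam f :: "nat list" and n :: nat
    and x z :: "nat \<Rightarrow> 'a::comm_ring_1" and b :: "int \<Rightarrow> 'a"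
  assumes "strict_partition lam"
    and "length f = length lam"
    and "2 \<le> length lam \<longrightarrow>
           f ! (length lam - 2) < lam ! (length lam - 2) \<or> f ! (length lam - 1) < lam ! (length lam - 1)"
  shows "Qlf lam f n x z b =
    (\<Sum>mu\<in>{mu. length mu = length lam \<and>
              (\<exists>nu k. mu = nu @ replicate k 0 \<and> strict_partition nu) \<and>
              (\<forall>i<length lam. mu ! i \<le> lam ! i) \<and>
              sorted_wrt (\<ge>) (bar mu)}.
       Qfac mu n x b * sTilde (bar lam) (bar mu) f z (bext b))"
proof -
  note sp = assms(1) and lf = assms(2) and hyp = assms(3)
  define M where "M = {mu. length mu = length lam \<and>
              (\<exists>nu k. mu = nu @ replicate k 0 \<and> strict_partition nu) \<and>
              (\<forall>i<length lam. mu ! i \<le> lam ! i) \<and>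
              sorted_wrt (\<ge>) (bar mu)}"
  define A where "A mu = {T. marked_tableau mu (replicate (length mu) 0) n T}" for mu
  define B where "B mu = {T. rs_tableau (bar lam) (bar mu) f T}" for mu
  define MT where "MT = {T. marked_tableau lam f n T}"
  define h where "h = (\<lambda>(mu::nat list, t::(nat \<times> nat \<Rightarrow> letter) \<times> (nat \<times> nat \<Rightarrow> nat)). comb lam mu (fst t) (snd t))"
  define Sig where "Sig = Sigma M (\<lambda>mu. A mu \<times> B mu)"
  define W where "W T = (\<Prod>p\<in>shdiag lam. lweight x z (bext b) (fst p) (snd p) (T p))" for T
  define w1 where "w1 mu T1 = (\<Prod>p\<in>shdiag mu. lweight x (\<lambda>_. 0) (bext b) (fst p) (snd p) (T1 p))" for mu T1
  define w2 where "w2 mu T2 = (\<Prod>p\<in>skdiag (bar lam) (bar mu). z (T2 p) + bext b (int (T2 p) + int (fst p) - int (snd p)))" for mu T2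
  have inj: "inj_on h Sig"
  proof (rule inj_onI)
    fix s s' assume s: "s \<in> Sig" and s': "s' \<in> Sig" and e: "h s = h s'"
    obtain mu T1 T2 where sd: "s = (mu, (T1, T2))" by (cases s) auto
    obtain mu' T1' T2' where sd': "s' = (mu', (T1', T2'))" by (cases s') auto
    have m: "mu \<in> M" "T1 \<in> A mu" "T2 \<in> B mu" using s sd by (auto simp: Sig_def)
    have m': "mu' \<in> M" "T1' \<in> A mu'" "T2' \<in> B mu'" using s' sd' by (auto simp: Sig_def)
    have len: "length mu = length lam" "\<forall>i<length lam. mu ! i \<le> lam ! i" using m(1) by (auto simp: M_def)
    have len': "length mu' = length lam" "\<forall>i<length lam. mu' ! i \<le> lam ! i" using m'(1) by (auto simp: M_def)
    have MT1: "marked_tableau mu (replicate (length mu) 0) n T1" using m(2) by (simp add: A_def)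
    have MT1': "marked_tableau mu' (replicate (length mu') 0) n T1'" using m'(2) by (simp add: A_def)
    have RS: "rs_tableau (bar lam) (bar mu) f T2" using m(3) by (simp add: B_def)
    have RS': "rs_tableau (bar lam) (bar mu') f T2'" using m'(3) by (simp add: B_def)
    have ec: "comb lam mu T1 T2 = comb lam mu' T1' T2'" using e sd sd' by (simp add: h_def)
    have mm: "mu = mu'"
      using shape_comb[OF len MT1, of T2] shape_comb[OF len' MT1', of T2'] ec by simp
    have KD: "skdiag (bar lam) (bar mu) = shdiag lam - shdiag mu" using sk_eq[OF len] .
    have t1: "T1 = T1'"
    proof
      fix p show "T1 p = T1' p"
      proof (cases "p \<in> shdiag mu")
        case True
        then show ?thesis using fun_cong[OF ec, of p] mm by (simp add: comb_def)
      next
        case False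
        then show ?thesis using mt_out[OF MT1 False] mt_out[OF MT1'] mm by simp
      qed
    qed
    have t2: "T2 = T2'"
    proof
      fix p show "T2 p = T2' p"
      proof (cases "p \<in> skdiag (bar lam) (bar mu)")
        case True
        then have "p \<notin> shdiag mu" using KD by blast
        then show ?thesis using True fun_cong[OF ec, of p] mm by (simp add: comb_def)
      next
        case False
        then show ?thesis using rs_out[OF RS False] rs_out[OF RS'] mm by simp
      qed
    qed
    show "s = s'" using sd sd' mm t1 t2 by simp
  qed
  have img: "h ` Sig = MT"
  proof
    show "h ` Sig \<subseteq> MT"
    proof
      fix T assume "T \<in> h ` Sig"
      then obtain mu T1 T2 where s: "(mu, (T1, T2)) \<in> Sig" and T: "T = comb lam mu T1 T2"
        by (auto simp: h_def)
      have m: "mu \<in> M" "T1 \<in> A mu" "T2 \<in> B mu" using s by (auto simp: Sig_def)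
      have len: "length mu = length lam" "\<forall>i<length lam. mu ! i \<le> lam ! i" "sorted_wrt (\<ge>) (bar mu)"
        using m(1) by (auto simp: M_def)
      have MT1: "marked_tableau mu (replicate (length mu) 0) n T1" using m(2) by (simp add: A_def)
      have RS: "rs_tableau (bar lam) (bar mu) f T2" using m(3) by (simp add: B_def)
      show "T \<in> MT" using comb_mt[OF len MT1 RS] T by (simp add: MT_def)
    qed
  next
    show "MT \<subseteq> h ` Sig"
    proof
      fix T assume "T \<in> MT"
      then have MTT: "marked_tableau lam f n T" by (simp add: MT_def)
      let ?mu = "shape lam T"
      have "?mu \<in> M" using shape_props[OF MTT sp hyp] shape_le[of lam T] by (simp add: M_def)
      moreover have "part1 ?mu T \<in> A ?mu" using part1_A[OF MTT] by (simp add: A_def)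
      moreover have "part2 lam ?mu T \<in> B ?mu" using part2_B[OF MTT] by (simp add: B_def)
      ultimately have "(?mu, (part1 ?mu T, part2 lam ?mu T)) \<in> Sig" by (simp add: Sig_def)
      moreover have "h (?mu, (part1 ?mu T, part2 lam ?mu T)) = T" using recon[OF MTT] by (simp add: h_def)
      ultimately show "T \<in> h ` Sig" by (metis image_eqI)
    qed
  qed
  have bij: "bij_betw h Sig MT" using inj img by (simp add: bij_betw_def)
  have finM: "finite M"
  proof (rule finite_subset)
    show "M \<subseteq> {xs. set xs \<subseteq> {..sum_list lam} \<and> length xs = length lam}"
    proof
      fix mu assume "mu \<in> M"
      then have a: "length mu = length lam" "\<forall>i<length lam. mu ! i \<le> lam ! i" by (auto simp: M_def)
      have "set mu \<subseteq> {..sum_list lam}"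
      proof
        fix y assume "y \<in> set mu"
        then obtain i where i: "i < length mu" "y = mu ! i" by (auto simp: in_set_conv_nth)
        have "lam ! i \<in> set lam" using i a by simp
        then have "lam ! i \<le> sum_list lam" by (rule member_le_sum_list) simp
        then show "y \<in> {..sum_list lam}" using i a by fastforce
      qed
      then show "mu \<in> {xs. set xs \<subseteq> {..sum_list lam} \<and> length xs = length lam}" using a by simp
    qed
    show "finite {xs. set xs \<subseteq> {..sum_list lam} \<and> length xs = length lam}"
      by (rule finite_lists_length_eq) simp
  qed
  have finAB: "\<forall>mu\<in>M. finite (A mu \<times> B mu)"
    using fin_A fin_B[of f "bar lam"] lf by (simp add: A_def B_def)
  have "Qlf lam f n x z b = (\<Sum>T\<in>MT. W T)" by (simp add: Qlf_def MT_def W_def)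
  also have "\<dots> = (\<Sum>s\<in>Sig. W (h s))" using sum.reindex_bij_betw[OF bij, of W] by simp
  also have "\<dots> = (\<Sum>s\<in>Sig. (case s of (mu, t) \<Rightarrow> w1 mu (fst t) * w2 mu (snd t)))"
  proof (rule sum.cong)
    fix s assume s: "s \<in> Sig"
    obtain mu T1 T2 where sd: "s = (mu, (T1, T2))" by (cases s) auto
    have m: "mu \<in> M" "T1 \<in> A mu" using s sd by (auto simp: Sig_def)
    have len: "length mu = length lam" "\<forall>i<length lam. mu ! i \<le> lam ! i" using m(1) by (auto simp: M_def)
    have MT1: "marked_tableau mu (replicate (length mu) 0) n T1" using m(2) by (simp add: A_def)
    show "W (h s) = (case s of (mu, t) \<Rightarrow> w1 mu (fst t) * w2 mu (snd t))"
      using wfac[OF len MT1, of x z "bext b" T2] sd by (simp add: W_def w1_def w2_def h_def)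
  qed simp
  also have "\<dots> = (\<Sum>mu\<in>M. \<Sum>t\<in>A mu \<times> B mu. w1 mu (fst t) * w2 mu (snd t))"
    unfolding Sig_def by (rule sum.Sigma[symmetric]) (use finM finAB in auto)
  also have "\<dots> = (\<Sum>mu\<in>M. Qfac mu n x b * sTilde (bar lam) (bar mu) f z (bext b))"
  proof (rule sum.cong)
    fix mu assume "mu \<in> M"
    have q: "Qfac mu n x b = (\<Sum>T1\<in>A mu. w1 mu T1)" by (simp add: Qfac_def Qlf_def A_def w1_def)
    have st: "sTilde (bar lam) (bar mu) f z (bext b) = (\<Sum>T2\<in>B mu. w2 mu T2)"
      by (simp add: sTilde_def B_def w2_def)
    have "(\<Sum>t\<in>A mu \<times> B mu. w1 mu (fst t) * w2 mu (snd t)) = (\<Sum>T1\<in>A mu. \<Sum>T2\<in>B mu. w1 mu T1 * w2 mu T2)"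
      by (simp add: sum.cartesian_product case_prod_beta')
    also have "\<dots> = (\<Sum>T1\<in>A mu. w1 mu T1) * (\<Sum>T2\<in>B mu. w2 mu T2)" by (rule sum_product[symmetric])
    finally show "(\<Sum>t\<in>A mu \<times> B mu. w1 mu (fst t) * w2 mu (snd t)) = Qfac mu n x b * sTilde (bar lam) (bar mu) f z (bext b)"
      using q st by simp
  qed simp
  finally show ?thesis unfolding M_def .
qed

end
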